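(* The function $\nabla=\partial^2$ satisfies $\big[\tfrac98(\nabla')^2+\Lambda(\nabla-1)\big]^2=\nabla(\nabla-1)^2(4\nabla-3)^2$, where $\Lambda=1-2\lambda^2$.
   Context: Let $0<\kappa<1$ and $\lambda=\sqrt{1-\kappa^2}$. Let $F(\tfrac16,\tfrac56;\tfrac12;\cdot)$ denote the Gauss hypergeometric function. Define $u$ as a function of $\phi$ near $0$ by $u=\int_0^{\sin\phi}F(\tfrac16,\tfrac56;\tfrac12;\kappa^2t^2)\,\frac{dt}{\sqrt{1-t^2}}$; near the origin (fixing $0$) this inverts to a holomorphic function $u\mapsto\phi(u)$ with $\phi(0)=0$. Let $\psi$ be the holomorphic function near $0$ with $\psi(0)=0$ and $\sin\psi=\kappa\sin\phi$. Set $\partial=\cos\tfrac23\psi$ and $\nabla=\partial^2$, as functions of $u$ on a small disc about $0$; primes denote $d/du$. *)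

theory Defs
  imports "HOL-Complex_Analysis.Complex_Analysis"
begin

definition hyp2f1 :: "complex \<Rightarrow> complex \<Rightarrow> complex \<Rightarrow> complex \<Rightarrow> complex" where
  "hyp2f1 a b c z =
     (\<Sum>n. (pochhammer a n * pochhammer b n / (pochhammer c n * fact n)) * z ^ n)"

definition u_of_phi :: "real \<Rightarrow> complex \<Rightarrow> complex" where
  "u_of_phi \<kappa> \<phi> =
     contour_integral (linepath 0 (sin \<phi>))
       (\<lambda>t. hyp2f1 (1/6) (5/6) (1/2) ((complex_of_real \<kappa>)\<^sup>2 * t\<^sup>2) / csqrt (1 - t\<^sup>2))"

end

theory Submission
  imports Defs
begin


definition hc :: "nat \<Rightarrow> complex" where
  "hc n = pochhammer (1/6) n * pochhammer (5/6) n / (pochhammer (1/2) n * fact n)"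
definition HG :: "complex fps" where "HG = Abs_fps hc"

lemma hyp_eval: "hyp2f1 (1/6) (5/6) (1/2) x = eval_fps HG x"
  by (simp add: hyp2f1_def eval_fps_def HG_def hc_def)

lemma poch_half_nz: "pochhammer (1/2::complex) n \<noteq> 0"
proof
  assume "pochhammer (1/2::complex) n = 0"
  then obtain k where "(1/2::complex) = - of_nat k" by (auto simp: pochhammer_eq_0_iff)
  then have "Re (1/2::complex) = Re (- (of_nat k::complex))" by (rule arg_cong)
  then show False by simp
qed

lemma hc_Suc: "hc (Suc n) = hc n * ((1/6 + of_nat n) * (5/6 + of_nat n) / ((1/2 + of_nat n) * (of_nat n + 1)))"
proof -
  have a: "(1/2 + of_nat n :: complex) \<noteq> 0"
  proof
    assume "(1/2 + of_nat n :: complex) = 0"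
    then have "Re (1/2 + of_nat n :: complex) = 0" by simp
    then show False by simp
  qed
  have b: "(of_nat n + 1 :: complex) \<noteq> 0"
    by (metis of_nat_Suc of_nat_eq_0_iff add.commute nat.distinct(1))
  show ?thesis using a b poch_half_nz[of n]
    by (simp add: hc_def pochhammer_Suc field_simps)
qed

lemma hc_Suc': "hc (Suc n) * ((1/2 + of_nat n) * (of_nat n + 1)) = hc n * ((1/6 + of_nat n) * (5/6 + of_nat n))"
proof -
  have a: "(1/2 + of_nat n :: complex) \<noteq> 0"
  proof
    assume "(1/2 + of_nat n :: complex) = 0"
    then have "Re (1/2 + of_nat n :: complex) = 0" by simp
    then show False by simp
  qed
  have b: "(of_nat n + 1 :: complex) \<noteq> 0"
    by (metis of_nat_Suc of_nat_eq_0_iff add.commute nat.distinct(1))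
  show ?thesis using a b unfolding hc_Suc by simp
qed

lemma hc_bound: "norm (hc n) \<le> 1"
proof (induction n)
  case 0 then show ?case by (simp add: hc_def)
next
  case (Suc n)
  define q :: real where "q = (1/6 + real n) * (5/6 + real n) / ((1/2 + real n) * (real n + 1))"
  have "((1/6 + of_nat n) * (5/6 + of_nat n) / ((1/2 + of_nat n) * (of_nat n + 1)) :: complex) = of_real q"
    by (simp add: q_def)
  moreover have "0 \<le> q" unfolding q_def by (auto simp: field_simps)
  moreover have "(1/6 + real n) * (5/6 + real n) \<le> (1/2 + real n) * (real n + 1)"
    by (simp add: field_simps)
  then have "q \<le> 1" unfolding q_def by (simp add: divide_le_eq_1)
  ultimately have "norm ((1/6 + of_nat n) * (5/6 + of_nat n) / ((1/2 + of_nat n) * (of_nat n + 1)) :: complex) \<le> 1"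
    by simp
  then show ?case using Suc unfolding hc_Suc norm_mult
    by (metis mult_le_one norm_ge_zero)
qed

lemma HG_radius: "fps_conv_radius HG \<ge> 1"
  unfolding fps_conv_radius_def HG_def fps_nth_Abs_fps
proof (rule conv_radius_geI_ex')
  fix r :: real assume r: "0 < r" "ereal r < 1"
  then have r1: "r < 1" by simp
  show "summable (\<lambda>n. hc n * complex_of_real r ^ n)"
  proof (rule summable_comparison_test')
    show "summable (\<lambda>n. r ^ n)" using r r1 by (simp add: summable_geometric)
    fix n
    show "norm (hc n * complex_of_real r ^ n) \<le> r ^ n"
      using hc_bound[of n] r by (simp add: norm_mult norm_power mult_left_le_one_le)
  qed
qed

lemma HG_ode:
  "fps_X * fps_deriv (fps_deriv HG) - fps_X^2 * fps_deriv (fps_deriv HG)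
     + fps_const (1/2) * fps_deriv HG - fps_const 2 * (fps_X * fps_deriv HG)
     - fps_const (5/36) * HG = 0"
proof (rule fps_ext)
  fix n
  show "(fps_X * fps_deriv (fps_deriv HG) - fps_X^2 * fps_deriv (fps_deriv HG)
     + fps_const (1/2) * fps_deriv HG - fps_const 2 * (fps_X * fps_deriv HG)
     - fps_const (5/36) * HG) $ n = 0 $ n"
  proof (cases n)
    case 0
    then show ?thesis by (simp add: HG_def fps_X_power_mult_nth hc_Suc)
  next
    case (Suc m)
    show ?thesis
    proof (cases m)
      case 0
      have h: "hc (Suc (Suc 0)) = hc (Suc 0) * ((1/6 + 1) * (5/6 + 1) / ((1/2 + 1) * (1 + 1)))"
        using hc_Suc[of 1] by simp
      show ?thesis by (simp add: Suc 0 HG_def fps_X_power_mult_nth h field_simps)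
    next
      case (Suc k)
      have h: "hc (Suc (Suc (Suc k))) = hc (Suc (Suc k)) * ((1/6 + of_nat (Suc (Suc k))) * (5/6 + of_nat (Suc (Suc k))) / ((1/2 + of_nat (Suc (Suc k))) * (of_nat (Suc (Suc k)) + 1)))"
        using hc_Suc[of "Suc (Suc k)"] by simp
      have nz: "(1/2 + of_nat (Suc (Suc k)) :: complex) \<noteq> 0"
      proof
        assume "(1/2 + of_nat (Suc (Suc k)) :: complex) = 0"
        then have "Re (1/2 + of_nat (Suc (Suc k)) :: complex) = Re 0" by (rule arg_cong)
        then show False by simp
      qed
      have nz2: "(of_nat (Suc (Suc k)) + 1 :: complex) \<noteq> 0"
        by (metis of_nat_Suc of_nat_eq_0_iff add.commute nat.distinct(1))
      have h2: "hc (Suc (Suc (Suc k))) * ((1/2 + of_nat k + 2) * (of_nat k + 3)) = hc (Suc (Suc k)) * ((1/6 + of_nat k + 2) * (5/6 + of_nat k + 2))"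
        using hc_Suc'[of "Suc (Suc k)"] by (simp add: algebra_simps)
      show ?thesis
        apply (simp add: \<open>n = Suc m\<close> Suc HG_def fps_X_power_mult_nth)
        using h2 by algebra
    qed
  qed
qed



lemma lin_ode_zero:
  fixes p :: "complex \<Rightarrow> complex"
  assumes "convex S" "0 \<in> S" "p 0 = 0"
    and "\<And>z. z \<in> S \<Longrightarrow> (p has_field_derivative c * p z) (at z within S)"
  shows "\<And>z. z \<in> S \<Longrightarrow> p z = 0"
proof -
  have "\<And>z. z \<in> S \<Longrightarrow> ((\<lambda>z. p z * exp (- c * z)) has_field_derivative 0) (at z within S)"
  proof -
    fix z assume z: "z \<in> S"
    have "((\<lambda>z. p z * exp (- c * z)) has_field_derivative
           (c * p z) * exp (- c * z) + exp (- c * z) * (- c) * p z) (at z within S)"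
    proof (rule DERIV_mult[OF assms(4)[OF z]])
      show "((\<lambda>z. exp (- c * z)) has_field_derivative exp (- c * z) * (- c)) (at z within S)"
        by (rule DERIV_chain2[where f=exp, OF DERIV_exp]) (auto intro!: derivative_eq_intros)
    qed
    then show "((\<lambda>z. p z * exp (- c * z)) has_field_derivative 0) (at z within S)"
      by (simp add: algebra_simps)
  qed
  then obtain k where k: "\<forall>z\<in>S. p z * exp (- c * z) = k"
    using has_field_derivative_zero_constant[OF assms(1)] by blast
  have "k = 0" using k assms(2,3) by force
  fix z assume "z \<in> S"
  then have "p z * exp (- c * z) = 0" using k \<open>k = 0\<close> by simp
  then show "p z = 0" by simp
qed

lemma ode2_zero:
  fixes w w1 :: "complex \<Rightarrow> complex"
  assumes "convex S" "0 \<in> S" "w 0 = 0" "w1 0 = 0" "k \<noteq> 0"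
    and "\<And>z. z \<in> S \<Longrightarrow> (w has_field_derivative w1 z) (at z within S)"
    and "\<And>z. z \<in> S \<Longrightarrow> (w1 has_field_derivative - (k^2) * w z) (at z within S)"
  shows "\<And>z. z \<in> S \<Longrightarrow> w z = 0"
proof -
  have gen: "\<And>z. z \<in> S \<Longrightarrow> w1 z + c * w z = 0" if c: "c * c = - (k * k)" for c
  proof (rule lin_ode_zero[OF assms(1,2), of "\<lambda>z. w1 z + c * w z" c])
    show "w1 0 + c * w 0 = 0" using assms by simp
    fix z assume z: "z \<in> S"
    have "((\<lambda>z. w1 z + c * w z) has_field_derivative - (k^2) * w z + c * w1 z) (at z within S)"
      by (intro DERIV_add DERIV_cmult assms(6,7) z)
    also have "- (k^2) * w z + c * w1 z = c * (w1 z + c * w z)"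
    proof -
      have cc: "c * (c * w z) = - (k * k) * w z" by (simp add: mult.assoc[symmetric] c)
      show ?thesis unfolding distrib_left cc power2_eq_square by (simp add: add.commute)
    qed
    finally show "((\<lambda>z. w1 z + c * w z) has_field_derivative c * (w1 z + c * w z)) (at z within S)" .
  qed
  fix z assume z: "z \<in> S"
  have i1: "(\<i> * k) * (\<i> * k) = - (k * k)"
  proof -
    have "(\<i> * k) * (\<i> * k) = (\<i> * \<i>) * (k * k)" by (simp only: ac_simps)
    then show ?thesis by simp
  qed
  have i2: "(- \<i> * k) * (- \<i> * k) = - (k * k)" using i1 by simp
  have "w1 z + (\<i> * k) * w z = 0" by (rule gen[OF i1 z])
  moreover have "w1 z + (- \<i> * k) * w z = 0" by (rule gen[OF i2 z])
  ultimately have "(2 * \<i> * k) * w z = 0" by (simp add: algebra_simps)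
  then show "w z = 0" using assms(5) by simp
qed

lemma eval_X_mult:
  fixes f :: "complex fps"
  assumes "fps_conv_radius f \<ge> 1" "norm x < 1"
  shows "eval_fps (fps_X * f) x = x * eval_fps f x"
proof -
  have "ereal (norm x) < 1" using assms by simp
  then have "ereal (norm x) < fps_conv_radius f" using assms(1) by (rule less_le_trans)
  then show ?thesis by (subst eval_fps_mult) (auto simp: eval_fps_power)
qed

lemma eval_X2_mult:
  fixes f :: "complex fps"
  assumes "fps_conv_radius f \<ge> 1" "norm x < 1"
  shows "eval_fps (fps_X^2 * f) x = x^2 * eval_fps f x"
proof -
  have "ereal (norm x) < 1" using assms by simp
  then have "ereal (norm x) < fps_conv_radius f" using assms(1) by (rule less_le_trans)
  then show ?thesis by (subst eval_fps_mult) (auto simp: eval_fps_power)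
qed

lemma eval_const_mult:
  fixes f :: "complex fps"
  assumes "fps_conv_radius f \<ge> 1" "norm x < 1"
  shows "eval_fps (fps_const c * f) x = c * eval_fps f x"
proof -
  have "ereal (norm x) < 1" using assms by simp
  then have "ereal (norm x) < fps_conv_radius f" using assms(1) by (rule less_le_trans)
  then show ?thesis by (subst eval_fps_mult) (auto simp: eval_fps_power)
qed

lemma rad_ge1_X: "fps_conv_radius f \<ge> 1 \<Longrightarrow> fps_conv_radius (fps_X * f) \<ge> 1"
  using fps_conv_radius_mult[of fps_X f] by (auto simp: min_def split: if_splits)
lemma rad_ge1_X2: "fps_conv_radius f \<ge> 1 \<Longrightarrow> fps_conv_radius (fps_X^2 * f) \<ge> 1"
  using fps_conv_radius_mult[of "fps_X^2" f] by (auto simp: min_def split: if_splits)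
lemma rad_ge1_c: "fps_conv_radius f \<ge> 1 \<Longrightarrow> fps_conv_radius (fps_const c * f) \<ge> 1"
  using fps_conv_radius_mult[of "fps_const c" f] by (auto simp: min_def split: if_splits)
lemma rad_ge1_add: "fps_conv_radius f \<ge> 1 \<Longrightarrow> fps_conv_radius g \<ge> 1 \<Longrightarrow> fps_conv_radius (f + g) \<ge> 1"
  using fps_conv_radius_add[of f g] by (auto simp: min_def split: if_splits)
lemma rad_ge1_diff: "fps_conv_radius f \<ge> 1 \<Longrightarrow> fps_conv_radius g \<ge> 1 \<Longrightarrow> fps_conv_radius (f - g) \<ge> 1"
  using fps_conv_radius_diff[of f g] by (auto simp: min_def split: if_splits)

lemma rad1: "fps_conv_radius (fps_deriv HG) \<ge> 1"
  using HG_radius fps_conv_radius_deriv[of HG] by (meson order_trans)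
lemma rad2: "fps_conv_radius (fps_deriv (fps_deriv HG)) \<ge> 1"
  using rad1 fps_conv_radius_deriv[of "fps_deriv HG"] by (meson order_trans)

lemma ev_ode:
  assumes x: "norm x < 1"
  shows "x * eval_fps (fps_deriv (fps_deriv HG)) x - x^2 * eval_fps (fps_deriv (fps_deriv HG)) x
     + 1/2 * eval_fps (fps_deriv HG) x - 2 * (x * eval_fps (fps_deriv HG) x)
     - 5/36 * eval_fps HG x = 0"
proof -
  let ?D2 = "fps_deriv (fps_deriv HG)" and ?D1 = "fps_deriv HG"
  have r: "norm x < fps_conv_radius f" if "fps_conv_radius f \<ge> 1" for f
  proof -
    have "ereal (norm x) < 1" using x by simp
    then show ?thesis using that by (rule less_le_trans)
  qed
  have "eval_fps (fps_X * ?D2 - fps_X^2 * ?D2 + fps_const (1/2) * ?D1 - fps_const 2 * (fps_X * ?D1)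
     - fps_const (5/36) * HG) x = 0" unfolding HG_ode by simp
  moreover
  have R1: "fps_conv_radius (fps_X * ?D2) \<ge> 1" by (intro rad_ge1_X rad2)
  have R2: "fps_conv_radius (fps_X^2 * ?D2) \<ge> 1" by (intro rad_ge1_X2 rad2)
  have R3: "fps_conv_radius (fps_const (1/2) * ?D1) \<ge> 1" by (intro rad_ge1_c rad1)
  have R4: "fps_conv_radius (fps_const 2 * (fps_X * ?D1)) \<ge> 1" by (intro rad_ge1_c rad_ge1_X rad1)
  have R5: "fps_conv_radius (fps_const (5/36) * HG) \<ge> 1" by (intro rad_ge1_c HG_radius)
  have R12: "fps_conv_radius (fps_X * ?D2 - fps_X^2 * ?D2) \<ge> 1" using R1 R2 by (rule rad_ge1_diff)
  have R123: "fps_conv_radius (fps_X * ?D2 - fps_X^2 * ?D2 + fps_const (1/2) * ?D1) \<ge> 1" using R12 R3 by (rule rad_ge1_add)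
  have R1234: "fps_conv_radius (fps_X * ?D2 - fps_X^2 * ?D2 + fps_const (1/2) * ?D1 - fps_const 2 * (fps_X * ?D1)) \<ge> 1" using R123 R4 by (rule rad_ge1_diff)
  have "eval_fps (fps_X * ?D2 - fps_X^2 * ?D2 + fps_const (1/2) * ?D1 - fps_const 2 * (fps_X * ?D1)
     - fps_const (5/36) * HG) x = eval_fps (fps_X * ?D2) x - eval_fps (fps_X^2 * ?D2) x + eval_fps (fps_const (1/2) * ?D1) x
       - eval_fps (fps_const 2 * (fps_X * ?D1)) x - eval_fps (fps_const (5/36) * HG) x"
    by (simp only: eval_fps_diff[OF r[OF R1234] r[OF R5]] eval_fps_diff[OF r[OF R123] r[OF R4]]
          eval_fps_add[OF r[OF R12] r[OF R3]] eval_fps_diff[OF r[OF R1] r[OF R2]])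
  moreover have "eval_fps (fps_const 2 * (fps_X * ?D1)) x = 2 * (x * eval_fps ?D1 x)"
    using eval_const_mult[OF rad_ge1_X[OF rad1] x] eval_X_mult[OF rad1 x] by simp
  ultimately show ?thesis
    using eval_X_mult[OF rad2 x] eval_X2_mult[OF rad2 x] eval_const_mult[OF rad1 x] eval_const_mult[OF HG_radius x]
    by simp
qed



lemma rr: "norm (x::complex) < 1 \<Longrightarrow> fps_conv_radius f \<ge> 1 \<Longrightarrow> ereal (norm x) < fps_conv_radius f"
proof -
  assume "norm x < 1" "fps_conv_radius f \<ge> 1"
  moreover have "ereal (norm x) < 1" using \<open>norm x < 1\<close> by simp
  ultimately show ?thesis by (meson less_le_trans)
qed

lemma small_sin:
  fixes e :: real assumes "e > 0"
  obtains d where "d > 0" "\<And>z::complex. norm z < d \<Longrightarrow> norm (sin z ^ 2) < e"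
proof -
  have "isCont (\<lambda>z::complex. sin z ^ 2) 0" by (intro continuous_intros)
  then have "(\<lambda>z::complex. sin z ^ 2) \<midarrow>0\<rightarrow> 0" unfolding isCont_def by simp
  from LIM_D[OF this assms] obtain s where "s > 0" and s: "\<forall>x::complex. x \<noteq> 0 \<and> norm (x - 0) < s \<longrightarrow> norm (sin x ^ 2 - 0) < e"
    by blast
  show ?thesis
  proof (rule that[of s])
    show "s > 0" by fact
    fix z :: complex assume "norm z < s"
    show "norm (sin z ^ 2) < e"
    proof (cases "z = 0")
      case True then show ?thesis using assms by simp
    next
      case False then show ?thesis using s \<open>norm z < s\<close> by simp
    qed
  qed
qed

lemma alg_aux:
  fixes sn cs G G1 G2 C :: complex
  assumes "sn^2 + cs^2 = 1" "sn^2 * G2 - (sn^2)^2 * G2 + 1/2 * G1 - 2 * (sn^2 * G1) - 5/36 * G = 0"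
  shows "(G2 * (2 * sn * cs)) * (2 * sn * cs * cs) + (2 * cs * cs * cs - 4 * sn * sn * cs) * G1 - ((G1 * (2 * sn * cs)) * sn + cs * G) + 4/9 * C = -((2/3)^2) * (G * cs - C)"
  using assms by algebra

lemma HG_closed:
  obtains d where "d > 0" "\<And>z. z \<in> ball 0 d \<Longrightarrow> eval_fps HG (sin z ^ 2) * cos z = cos (2/3 * z)"
proof -
  obtain d where d: "d > 0" "\<And>z::complex. norm z < d \<Longrightarrow> norm (sin z ^ 2) < 1"
    using small_sin[of 1] by auto
  define g where "g = eval_fps HG"
  define g1 where "g1 = eval_fps (fps_deriv HG)"
  define g2 where "g2 = eval_fps (fps_deriv (fps_deriv HG))"
  have gd: "(g has_field_derivative g1 x) (at x)" if "norm x < 1" for x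
    unfolding g_def g1_def by (rule has_field_derivative_eval_fps, rule rr[OF that HG_radius])
  have g1d: "(g1 has_field_derivative g2 x) (at x)" if "norm x < 1" for x
    unfolding g2_def g1_def by (rule has_field_derivative_eval_fps, rule rr[OF that rad1])
  have sd: "((\<lambda>z. sin z ^ 2) has_field_derivative 2 * sin z * cos z) (at z)" for z :: complex
    by (auto intro!: derivative_eq_intros)
  define w where "w z = g (sin z ^ 2) * cos z - cos (2/3 * z)" for z
  define w1 where "w1 z = g1 (sin z ^ 2) * (2 * sin z * cos z) * cos z - g (sin z ^ 2) * sin z + 2/3 * sin (2/3 * z)" for z
  have W: "(w has_field_derivative w1 z) (at z)" if "z \<in> ball 0 d" for z
  proof -
    have n: "norm (sin z ^ 2) < 1" using d that by auto
    have c1: "((\<lambda>z. g (sin z ^ 2)) has_field_derivative g1 (sin z ^ 2) * (2 * sin z * cos z)) (at z)"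
      by (rule DERIV_chain2[OF gd[OF n] sd])
    have "(w has_field_derivative (g1 (sin z ^ 2) * (2 * sin z * cos z)) * cos z + (- sin z) * g (sin z ^ 2) - (- sin (2/3 * z) * (2/3))) (at z)"
      unfolding w_def
      by (intro DERIV_diff DERIV_mult c1 DERIV_cos) (rule DERIV_chain2[OF DERIV_cos], auto intro!: derivative_eq_intros)
    then show ?thesis unfolding w1_def by (simp add: algebra_simps)
  qed
  have W1: "(w1 has_field_derivative - ((2/3)^2) * w z) (at z)" if "z \<in> ball 0 d" for z
  proof -
    have n: "norm (sin z ^ 2) < 1" using d that by auto
    have c1: "((\<lambda>z. g (sin z ^ 2)) has_field_derivative g1 (sin z ^ 2) * (2 * sin z * cos z)) (at z)"
      by (rule DERIV_chain2[OF gd[OF n] sd])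
    have c2: "((\<lambda>z. g1 (sin z ^ 2)) has_field_derivative g2 (sin z ^ 2) * (2 * sin z * cos z)) (at z)"
      by (rule DERIV_chain2[OF g1d[OF n] sd])
    have scd: "((\<lambda>z. 2 * sin z * cos z * cos z) has_field_derivative 2 * cos z * cos z * cos z - 4 * sin z * sin z * cos z) (at z)"
      by (auto intro!: derivative_eq_intros simp: algebra_simps)
    have s23: "((\<lambda>z. 2/3 * sin (2/3 * z)) has_field_derivative 4/9 * cos (2/3 * z)) (at z)"
      by (auto intro!: derivative_eq_intros)
    have "((\<lambda>z. g1 (sin z ^ 2) * (2 * sin z * cos z * cos z) - g (sin z ^ 2) * sin z + 2/3 * sin (2/3 * z))
        has_field_derivative
          (g2 (sin z ^ 2) * (2 * sin z * cos z)) * (2 * sin z * cos z * cos z) + (2 * cos z * cos z * cos z - 4 * sin z * sin z * cos z) * g1 (sin z ^ 2)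
          - ((g1 (sin z ^ 2) * (2 * sin z * cos z)) * sin z + cos z * g (sin z ^ 2)) + 4/9 * cos (2/3 * z)) (at z)"
      by (intro DERIV_add DERIV_diff DERIV_mult c1 c2 scd s23 DERIV_sin)
    moreover have "w1 = (\<lambda>z. g1 (sin z ^ 2) * (2 * sin z * cos z * cos z) - g (sin z ^ 2) * sin z + 2/3 * sin (2/3 * z))"
      unfolding w1_def by (simp add: fun_eq_iff algebra_simps)
    moreover
    have ode: "sin z ^ 2 * g2 (sin z ^ 2) - (sin z ^ 2)^2 * g2 (sin z ^ 2) + 1/2 * g1 (sin z ^ 2)
        - 2 * (sin z ^ 2 * g1 (sin z ^ 2)) - 5/36 * g (sin z ^ 2) = 0"
      using ev_ode[OF n] unfolding g_def g1_def g2_def .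
    have sc: "sin z ^ 2 + cos z ^ 2 = 1" by simp
    have "(g2 (sin z ^ 2) * (2 * sin z * cos z)) * (2 * sin z * cos z * cos z) + (2 * cos z * cos z * cos z - 4 * sin z * sin z * cos z) * g1 (sin z ^ 2)
          - ((g1 (sin z ^ 2) * (2 * sin z * cos z)) * sin z + cos z * g (sin z ^ 2)) + 4/9 * cos (2/3 * z)
         = - ((2/3)^2) * w z"
      unfolding w_def by (rule alg_aux[OF sc ode])
    ultimately show ?thesis by simp
  qed
  have "w z = 0" if "z \<in> ball 0 d" for z
  proof (rule ode2_zero[of "ball 0 d" w w1 "2/3"])
    show "w 0 = 0" by (simp add: w_def g_def eval_fps_at_0 HG_def hc_def)
    show "w1 0 = 0" by (simp add: w1_def)
  qed (use d that W W1 in \<open>auto intro: has_field_derivative_at_within\<close>)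
  then show ?thesis using d by (intro that[of d]) (auto simp: w_def g_def)
qed



lemma hyp_fun: "(\<lambda>t. hyp2f1 (1/6) (5/6) (1/2) (f t)) = (\<lambda>t. eval_fps HG (f t))"
  by (simp add: hyp_eval)

lemma U_deriv:
  fixes \<kappa> :: real
  assumes k: "0 < \<kappa>" "\<kappa> < 1"
  obtains W where "open W" "0 \<in> W"
    "\<And>\<phi>. \<phi> \<in> W \<Longrightarrow> (u_of_phi \<kappa> has_field_derivative
         hyp2f1 (1/6) (5/6) (1/2) ((complex_of_real \<kappa>)\<^sup>2 * (sin \<phi>)\<^sup>2)) (at \<phi>)"
    "\<And>\<phi>. \<phi> \<in> W \<Longrightarrow> norm (sin \<phi>) < 1/2"
proof -
  define B where "B = ball (0::complex) (1/2)"
  define I where "I t = hyp2f1 (1/6) (5/6) (1/2) ((complex_of_real \<kappa>)\<^sup>2 * t\<^sup>2) / csqrt (1 - t\<^sup>2)" for t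
  have kk: "norm ((complex_of_real \<kappa>)\<^sup>2 * t\<^sup>2) < 1" if "t \<in> B" for t
  proof -
    have "norm t < 1/2" using that by (simp add: B_def)
    then have "norm t ^ 2 \<le> (1/2)^2" by (intro power_mono) auto
    moreover have "\<kappa>^2 \<le> 1" using k by (simp add: power_le_one)
    ultimately have "\<kappa>^2 * norm t ^ 2 \<le> 1 * (1/2)^2"
      by (intro mult_mono) auto
    moreover have "(1/2::real)^2 = 1/4" by (simp add: power2_eq_square)
    ultimately have "\<kappa>^2 * norm t ^ 2 < 1" by linarith
    then show ?thesis by (simp add: norm_mult norm_power)
  qed
  have nonpos: "1 - t\<^sup>2 \<notin> \<real>\<^sub>\<le>\<^sub>0" if "t \<in> B" for t
  proof
    assume "1 - t\<^sup>2 \<in> \<real>\<^sub>\<le>\<^sub>0"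
    then have "Re (1 - t\<^sup>2) \<le> 0" by (simp add: complex_nonpos_Reals_iff)
    then have "1 \<le> Re (t\<^sup>2)" by simp
    also have "Re (t\<^sup>2) \<le> norm (t\<^sup>2)" by (rule complex_Re_le_cmod)
    also have "norm (t\<^sup>2) = norm t ^ 2" by (simp add: norm_power)
    also have "norm t ^ 2 \<le> (1/2)^2" using that by (intro power_mono) (auto simp: B_def)
    finally show False by (simp add: power2_eq_square)
  qed
  have holI: "I holomorphic_on B"
  proof -
    have "(\<lambda>t. eval_fps HG ((complex_of_real \<kappa>)\<^sup>2 * t\<^sup>2)) holomorphic_on B"
    proof -
      have "(eval_fps HG \<circ> (\<lambda>t. (complex_of_real \<kappa>)\<^sup>2 * t\<^sup>2)) holomorphic_on B"
      proof (rule holomorphic_on_compose_gen)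
        show "(\<lambda>t. (complex_of_real \<kappa>)\<^sup>2 * t\<^sup>2) holomorphic_on B" by (intro holomorphic_intros)
        show "eval_fps HG holomorphic_on ball 0 1"
          by (rule holomorphic_on_eval_fps) (auto intro!: rr[OF _ HG_radius])
        show "(\<lambda>t. (complex_of_real \<kappa>)\<^sup>2 * t\<^sup>2) ` B \<subseteq> ball 0 1" using kk by auto
      qed
      then show ?thesis by (simp add: o_def)
    qed
    note H = this
    have eq: "I = (\<lambda>t. eval_fps HG ((complex_of_real \<kappa>)\<^sup>2 * t\<^sup>2) / csqrt (1 - t\<^sup>2))"
      by (simp add: I_def hyp_eval fun_eq_iff)
    have cs: "(\<lambda>t. csqrt (1 - t\<^sup>2)) holomorphic_on B"
      by (rule holomorphic_on_csqrt') (intro holomorphic_intros, rule nonpos)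
    have nz: "csqrt (1 - t\<^sup>2) \<noteq> 0" if "t \<in> B" for t
    proof
      assume "csqrt (1 - t\<^sup>2) = 0"
      then have "1 - t\<^sup>2 = 0" by simp
      then have "1 - t\<^sup>2 \<in> \<real>\<^sub>\<le>\<^sub>0" by simp
      with nonpos[OF that] show False by blast
    qed
    show ?thesis unfolding eq by (rule holomorphic_on_divide[OF H cs nz])
  qed
  have cB: "convex B" and oB: "open B" by (simp_all add: B_def)
  obtain P where P: "\<And>x. x \<in> B \<Longrightarrow> (P has_field_derivative I x) (at x within B)"
    using holomorphic_convex_primitive'[OF cB oB holI] by metis
  have P': "(P has_field_derivative I x) (at x)" if "x \<in> B" for x
    using P[OF that] by (simp add: at_within_open[OF that oB])
  have Ueq: "u_of_phi \<kappa> \<phi> = P (sin \<phi>) - P 0" if "sin \<phi> \<in> B" for \<phi>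
  proof -
    have "(I has_contour_integral (P (pathfinish (linepath 0 (sin \<phi>))) - P (pathstart (linepath 0 (sin \<phi>))))) (linepath 0 (sin \<phi>))"
    proof (rule contour_integral_primitive[OF P])
      have "0 \<in> B" by (simp add: B_def)
      then show "path_image (linepath 0 (sin \<phi>)) \<subseteq> B"
        using that cB by (simp add: closed_segment_subset)
    qed auto
    then show ?thesis unfolding u_of_phi_def I_def[symmetric]
      by (simp add: contour_integral_unique)
  qed
  define W where "W = (\<lambda>\<phi>. sin \<phi>) -` B \<inter> (\<lambda>\<phi>. Re (cos \<phi>)) -` {0<..}"
  have oW: "open W" unfolding W_def
    by (intro open_Int continuous_open_vimage) (auto simp: B_def intro!: continuous_intros)
  show ?thesis
  proof (rule that[of W])
    show "open W" by fact
    show "0 \<in> W" by (simp add: W_def B_def)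
    fix \<phi> assume phi: "\<phi> \<in> W"
    then show "norm (sin \<phi>) < 1/2" by (simp add: W_def B_def)
    have sB: "sin \<phi> \<in> B" and rc: "0 < Re (cos \<phi>)" using phi by (auto simp: W_def)
    have "((\<lambda>\<phi>. P (sin \<phi>) - P 0) has_field_derivative I (sin \<phi>) * cos \<phi>) (at \<phi>)"
      using DERIV_chain2[OF P'[OF sB] DERIV_sin[of \<phi>]] by (auto intro!: derivative_eq_intros)
    then have "(u_of_phi \<kappa> has_field_derivative I (sin \<phi>) * cos \<phi>) (at \<phi>)"
      by (rule has_field_derivative_transform_within_open[OF _ oW phi])
         (simp add: Ueq W_def)
    moreover have "I (sin \<phi>) * cos \<phi> = hyp2f1 (1/6) (5/6) (1/2) ((complex_of_real \<kappa>)\<^sup>2 * (sin \<phi>)\<^sup>2)"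
    proof -
      have "1 - (sin \<phi>)\<^sup>2 = (cos \<phi>)\<^sup>2" by (simp add: cos_squared_eq)
      moreover have "csqrt ((cos \<phi>)\<^sup>2) = cos \<phi>" using rc by (intro csqrt_square) auto
      moreover have "cos \<phi> \<noteq> 0" using rc by auto
      ultimately show ?thesis by (simp add: I_def)
    qed
    ultimately show "(u_of_phi \<kappa> has_field_derivative
         hyp2f1 (1/6) (5/6) (1/2) ((complex_of_real \<kappa>)\<^sup>2 * (sin \<phi>)\<^sup>2)) (at \<phi>)" by simp
  qed
qed



lemma final_alg:
  fixes K cc ss P D cp sp sq Lam :: complex
  assumes "cc * P = K * cp" "sq = K * sp" "ss^2 + cc^2 = 1" "sp^2 + cp^2 = 1"
    "1 - 2 * sq^2 = 4 * cc^3 - 3 * cc" "D = 2 * cc * (- ss * (2/3 * P))" "Lam = 2 * K^2 - 1"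
  shows "((9/8) * D^2 + Lam * (cc^2 - 1))^2 = cc^2 * (cc^2 - 1)^2 * (4 * cc^2 - 3)^2"
  using assms by algebra



theorem theorem8:
  fixes \<kappa> r :: real and \<phi> \<psi> :: "complex \<Rightarrow> complex"
  assumes "0 < \<kappa>" and "\<kappa> < 1" and "0 < r"
    and "\<phi> holomorphic_on ball 0 r" and "\<phi> 0 = 0"
    and "\<And>u. u \<in> ball 0 r \<Longrightarrow> u_of_phi \<kappa> (\<phi> u) = u"
    and "\<psi> holomorphic_on ball 0 r" and "\<psi> 0 = 0"
    and "\<And>u. u \<in> ball 0 r \<Longrightarrow> sin (\<psi> u) = complex_of_real \<kappa> * sin (\<phi> u)"
  shows "let lam = sqrt (1 - \<kappa>\<^sup>2); \<Lambda> = complex_of_real (1 - 2 * lam\<^sup>2);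
             nabla = (\<lambda>u. (cos (2/3 * \<psi> u))\<^sup>2)
         in \<forall>u \<in> ball 0 r.
              ((9/8) * (deriv nabla u)\<^sup>2 + \<Lambda> * (nabla u - 1))\<^sup>2
              = nabla u * (nabla u - 1)\<^sup>2 * (4 * nabla u - 3)\<^sup>2"
proof -
  note k = assms(1,2)
  note holphi = assms(4) and holpsi = assms(7)
  define \<Lambda> where "\<Lambda> = complex_of_real (1 - 2 * (sqrt (1 - \<kappa>\<^sup>2))\<^sup>2)"
  define nabla where "nabla = (\<lambda>u. (cos (2/3 * \<psi> u))\<^sup>2)"
  have Lam: "\<Lambda> = 2 * (complex_of_real \<kappa>)^2 - 1"
  proof -
    have "\<kappa>^2 \<le> 1" using k by (simp add: power_le_one)
    then have "(sqrt (1 - \<kappa>\<^sup>2))\<^sup>2 = 1 - \<kappa>^2" by simp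
    then show ?thesis unfolding \<Lambda>_def by simp
  qed
  obtain d where d: "d > 0" "\<And>z. z \<in> ball 0 d \<Longrightarrow> eval_fps HG (sin z ^ 2) * cos z = cos (2/3 * z)"
    using HG_closed by metis
  obtain W where W: "open W" "0 \<in> W"
    "\<And>\<phi>. \<phi> \<in> W \<Longrightarrow> (u_of_phi \<kappa> has_field_derivative
         hyp2f1 (1/6) (5/6) (1/2) ((complex_of_real \<kappa>)\<^sup>2 * (sin \<phi>)\<^sup>2)) (at \<phi>)"
    using U_deriv[OF k] by metis
  define T1 where "T1 = ball 0 r \<inter> \<phi> -` W"
  define T where "T = T1 \<inter> \<psi> -` ball 0 d"
  have contphi: "continuous_on (ball 0 r) \<phi>" by (rule holomorphic_on_imp_continuous_on[OF holphi])
  have contpsi: "continuous_on (ball 0 r) \<psi>" by (rule holomorphic_on_imp_continuous_on[OF holpsi])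
  have oT1: "open T1" unfolding T1_def by (rule continuous_open_preimage[OF contphi open_ball W(1)])
  have T1sub: "T1 \<subseteq> ball 0 r" by (auto simp: T1_def)
  have oT: "open T" unfolding T_def
    by (rule continuous_open_preimage[OF continuous_on_subset[OF contpsi T1sub] oT1 open_ball])
  have Tsub: "T \<subseteq> ball 0 r" using T1sub by (auto simp: T_def)
  have T0: "0 \<in> T" using assms(3,5,8) W(2) d(1) by (simp add: T_def T1_def)
  have holn: "nabla holomorphic_on ball 0 r" unfolding nabla_def by (intro holomorphic_intros holpsi)
  have holdn: "deriv nabla holomorphic_on ball 0 r" by (rule holomorphic_deriv[OF holn open_ball])
  have local: "((9/8) * (deriv nabla u)\<^sup>2 + \<Lambda> * (nabla u - 1))\<^sup>2
              = nabla u * (nabla u - 1)\<^sup>2 * (4 * nabla u - 3)\<^sup>2" if uT: "u \<in> T" for u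
  proof -
    have ub: "u \<in> ball 0 r" using uT Tsub by auto
    have phiW: "\<phi> u \<in> W" and psid: "\<psi> u \<in> ball 0 d" using uT by (auto simp: T_def T1_def)
    define A where "A = hyp2f1 (1/6) (5/6) (1/2) ((complex_of_real \<kappa>)\<^sup>2 * (sin (\<phi> u))\<^sup>2)"
    define p1 where "p1 = deriv \<phi> u"
    define q1 where "q1 = deriv \<psi> u"
    have dphi: "(\<phi> has_field_derivative p1) (at u)"
      unfolding p1_def by (rule holomorphic_derivI[OF holphi open_ball ub])
    have dpsi: "(\<psi> has_field_derivative q1) (at u)"
      unfolding q1_def by (rule holomorphic_derivI[OF holpsi open_ball ub])
    have c1: "((\<lambda>u. u_of_phi \<kappa> (\<phi> u)) has_field_derivative A * p1) (at u)"
      unfolding A_def by (rule DERIV_chain2[OF W(3)[OF phiW] dphi])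
    have c2: "((\<lambda>u. u_of_phi \<kappa> (\<phi> u)) has_field_derivative 1) (at u)"
      by (rule has_field_derivative_transform_within_open[OF DERIV_ident open_ball ub])
         (simp add: assms(6))
    have Ap: "A * p1 = 1" using DERIV_unique[OF c1 c2] .
    have s1: "((\<lambda>u. sin (\<psi> u)) has_field_derivative cos (\<psi> u) * q1) (at u)"
      by (rule DERIV_chain2[OF DERIV_sin dpsi])
    have s2: "((\<lambda>u. complex_of_real \<kappa> * sin (\<phi> u)) has_field_derivative complex_of_real \<kappa> * (cos (\<phi> u) * p1)) (at u)"
      by (rule DERIV_cmult, rule DERIV_chain2[OF DERIV_sin dphi])
    have s2': "((\<lambda>u. sin (\<psi> u)) has_field_derivative complex_of_real \<kappa> * (cos (\<phi> u) * p1)) (at u)"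
      by (rule has_field_derivative_transform_within_open[OF s2 open_ball ub]) (simp add: assms(9))
    have sder: "cos (\<psi> u) * q1 = complex_of_real \<kappa> * (cos (\<phi> u) * p1)"
      using DERIV_unique[OF s1 s2'] .
    have sps: "sin (\<psi> u) = complex_of_real \<kappa> * sin (\<phi> u)" by (rule assms(9)[OF ub])
    have "A = eval_fps HG ((sin (\<psi> u))^2)"
      unfolding A_def hyp_eval sps by (simp add: power_mult_distrib)
    then have Acos: "A * cos (\<psi> u) = cos (2/3 * \<psi> u)" using d(2)[OF psid] by simp
    have key: "cos (2/3 * \<psi> u) * q1 = complex_of_real \<kappa> * cos (\<phi> u)"
    proof -
      have "cos (2/3 * \<psi> u) * q1 = A * (cos (\<psi> u) * q1)" using Acos by (simp add: algebra_simps)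
      also have "\<dots> = complex_of_real \<kappa> * cos (\<phi> u) * (A * p1)" unfolding sder by (simp add: algebra_simps)
      finally show ?thesis using Ap by simp
    qed
    have dn: "(nabla has_field_derivative 2 * cos (2/3 * \<psi> u) * (- sin (2/3 * \<psi> u) * (2/3 * q1))) (at u)"
      unfolding nabla_def
      by (rule DERIV_chain2[OF _ DERIV_chain2[OF DERIV_cos DERIV_cmult[OF dpsi]]]) (auto intro!: derivative_eq_intros)
    have dnu: "deriv nabla u = 2 * cos (2/3 * \<psi> u) * (- sin (2/3 * \<psi> u) * (2/3 * q1))"
      by (rule DERIV_imp_deriv[OF dn])
    have tre: "1 - 2 * (sin (\<psi> u))^2 = 4 * (cos (2/3 * \<psi> u))^3 - 3 * cos (2/3 * \<psi> u)"
    proof -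
      have "cos (3 * (2/3 * \<psi> u)) = cos (2 * \<psi> u)" by simp
      then show ?thesis using cos_treble_cos[of "2/3 * \<psi> u"] cos_double_sin[of "\<psi> u"] by simp
    qed
    have nu: "nabla u = (cos (2/3 * \<psi> u))^2" by (simp add: nabla_def)
    show ?thesis unfolding nu
      by (rule final_alg[OF key sps sin_cos_squared_add sin_cos_squared_add tre dnu Lam])
  qed
  show ?thesis unfolding Let_def \<Lambda>_def[symmetric] nabla_def[symmetric]
  proof
    fix u :: complex assume u: "u \<in> ball 0 r"
    show "((9/8) * (deriv nabla u)\<^sup>2 + \<Lambda> * (nabla u - 1))\<^sup>2
              = nabla u * (nabla u - 1)\<^sup>2 * (4 * nabla u - 3)\<^sup>2"
    proof (rule analytic_continuation_open[OF oT open_ball _ connected_ball Tsub, where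
          f = "\<lambda>u::complex. ((9/8) * (deriv nabla u)\<^sup>2 + \<Lambda> * (nabla u - 1))\<^sup>2" and
          g = "\<lambda>u::complex. nabla u * (nabla u - 1)\<^sup>2 * (4 * nabla u - 3)\<^sup>2"])
      show "T \<noteq> {}" using T0 by blast
      show "(\<lambda>u. ((9/8) * (deriv nabla u)\<^sup>2 + \<Lambda> * (nabla u - 1))\<^sup>2) holomorphic_on ball 0 r"
        by (intro holomorphic_intros holn holdn)
      show "(\<lambda>u. nabla u * (nabla u - 1)\<^sup>2 * (4 * nabla u - 3)\<^sup>2) holomorphic_on ball 0 r"
        by (intro holomorphic_intros holn)
      show "\<And>z. z \<in> T \<Longrightarrow> ((9/8) * (deriv nabla z)\<^sup>2 + \<Lambda> * (nabla z - 1))\<^sup>2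
              = nabla z * (nabla z - 1)\<^sup>2 * (4 * nabla z - 3)\<^sup>2" by (rule local)
      show "u \<in> ball 0 r" by (rule u)
    qed
  qed
qed

end
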